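(* Let \(\mathcal{I}\) be an instance of 3-SAT and let \(G(\mathcal{I})\) and \(T(\mathcal{I})\) be the graph and spanning tree constructed below. If \(\mathcal{I}\) admits a satisfying assignment, then \(T(\mathcal{I})\) is the \(\mathcal{F}\)-tree of some LBFS ordering of \(G(\mathcal{I})\).
   Context: Let \(\mathcal{I}\) have variables \(x_1,\dots,x_k\) and clauses \(C_1,\dots,C_l\), each a disjunction of three literals. \(G(\mathcal{I})\) has vertices: literal vertices \(X=\{x_1,\dots,x_k,\overline{x_1},\dots,\overline{x_k}\}\); for each clause \(C_i\) three vertices \(a_i,c_i,t_i\); and four vertices \(r,p,q,u\). Edges: any two vertices of \(X\) are adjacent except the pairs \(x_j\overline{x_j}\); each \(\{a_i,c_i,t_i\}\) is a triangle; \(c_i\) is adjacent to the literal vertices of the literals occurring in \(C_i\); \(r\) is adjacent to every vertex except \(u\) and the \(t_i\); \(u\) is adjacent to every vertex except \(r\) and the \(t_i\); \(p\) is adjacent to every vertex of \(X\) and to \(q\); \(q\) is adjacent to every vertex of \(X\) and to every \(a_i\); there are no other edges. \(T(\mathcal{I})\) is the spanning tree consisting of all edges of \(G(\mathcal{I})\) incident to \(r\), the edge \(up\), and the edges \(c_it_i\) for \(i=1,\dots,l\). An LBFS ordering (with \(n\) the number of vertices) is produced by starting with label \((n)\) on a start vertex, empty labels elsewhere, and for \(j=1,\dots,n\) picking an unnumbered vertex of lexicographically largest label as \(v_j\) and appending \(n-j\) to the labels of its unnumbered neighbors (ties arbitrary). The \(\mathcal{F}\)-tree of an ordering \((v_1,\dots,v_n)\)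 has, for each \(v\ne v_1\), an edge from \(v\) to its leftmost neighbor in the ordering. *)

theory Defs
  imports Main
begin

(* A 3-SAT instance: k variables (indexed 0..<k), a list of clauses, each a list
   of three literals.  A literal is (j, b): b = True means x_j, b = False means
   the negation of x_j. *)
type_synonym literal = "nat \<times> bool"

definition sat3_instance :: "nat \<Rightarrow> literal list list \<Rightarrow> bool" where
  "sat3_instance k cls \<longleftrightarrow>
     (\<forall>c \<in> set cls. length c = 3 \<and> (\<forall>(j, b) \<in> set c. j < k))"

definition satisfies :: "(nat \<Rightarrow> bool) \<Rightarrow> literal list list \<Rightarrow> bool" where
  "satisfies \<sigma> cls \<longleftrightarrow> (\<forall>c \<in> set cls. \<exists>(j, b) \<in> set c. \<sigma> j = b)"

definition satisfiable :: "nat \<Rightarrow> literal list list \<Rightarrow> bool" where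
  "satisfiable k cls \<longleftrightarrow> (\<exists>\<sigma>. satisfies \<sigma> cls)"

datatype vert = Lit nat bool | Av nat | Cv nat | Tv nat | Rv | Pv | Qv | Uv

definition G_verts :: "nat \<Rightarrow> literal list list \<Rightarrow> vert set" where
  "G_verts k cls =
     {Lit j b | j b. j < k} \<union> {Av i | i. i < length cls} \<union> {Cv i | i. i < length cls}
     \<union> {Tv i | i. i < length cls} \<union> {Rv, Pv, Qv, Uv}"

definition is_T :: "vert \<Rightarrow> bool" where
  "is_T v \<longleftrightarrow> (\<exists>i. v = Tv i)"

definition is_X :: "vert \<Rightarrow> bool" where
  "is_X v \<longleftrightarrow> (\<exists>j b. v = Lit j b)"

definition G_edge0 :: "literal list list \<Rightarrow> vert \<Rightarrow> vert \<Rightarrow> bool" where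
  "G_edge0 cls v w \<longleftrightarrow>
     (\<exists>j b j' b'. v = Lit j b \<and> w = Lit j' b' \<and> j \<noteq> j')
   \<or> (\<exists>i. (v = Av i \<and> w = Cv i) \<or> (v = Av i \<and> w = Tv i) \<or> (v = Cv i \<and> w = Tv i))
   \<or> (\<exists>i j b. i < length cls \<and> (j, b) \<in> set (cls ! i) \<and> v = Cv i \<and> w = Lit j b)
   \<or> (v = Rv \<and> w \<noteq> Uv \<and> \<not> is_T w)
   \<or> (v = Uv \<and> w \<noteq> Rv \<and> \<not> is_T w)
   \<or> (v = Pv \<and> (is_X w \<or> w = Qv))
   \<or> (v = Qv \<and> (is_X w \<or> (\<exists>i. w = Av i)))"

definition G_adj :: "nat \<Rightarrow> literal list list \<Rightarrow> vert \<Rightarrow> vert \<Rightarrow> bool" where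
  "G_adj k cls v w \<longleftrightarrow>
     v \<in> G_verts k cls \<and> w \<in> G_verts k cls \<and> v \<noteq> w \<and> (G_edge0 cls v w \<or> G_edge0 cls w v)"

definition T_edges :: "nat \<Rightarrow> literal list list \<Rightarrow> vert set set" where
  "T_edges k cls =
     {{Rv, v} | v. G_adj k cls Rv v} \<union> {{Uv, Pv}} \<union> {{Cv i, Tv i} | i. i < length cls}"

(* Lexicographic order on labels (a proper prefix is smaller) *)
definition lex_less :: "nat list \<Rightarrow> nat list \<Rightarrow> bool" where
  "lex_less xs ys \<longleftrightarrow> (xs, ys) \<in> lexord {(a, b). a < b}"

(* Label of vertex w after the first j vertices vs!0, ..., vs!(j-1) have been
   numbered, with start vertex s and n = length vs.  Numbering the vertex at
   (1-based) step i+1 appends n - (i+1) to the labels of its neighbours. *)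
definition lbfs_label ::
  "('v \<Rightarrow> 'v \<Rightarrow> bool) \<Rightarrow> 'v \<Rightarrow> 'v list \<Rightarrow> nat \<Rightarrow> 'v \<Rightarrow> nat list" where
  "lbfs_label adj s vs j w =
     (if w = s then [length vs] else []) @
     map (\<lambda>i. length vs - (i + 1)) (filter (\<lambda>i. adj (vs ! i) w) [0..<j])"

definition is_lbfs :: "'v set \<Rightarrow> ('v \<Rightarrow> 'v \<Rightarrow> bool) \<Rightarrow> 'v list \<Rightarrow> bool" where
  "is_lbfs V adj vs \<longleftrightarrow>
     distinct vs \<and> set vs = V \<and>
     (\<exists>s \<in> V. \<forall>j < length vs. \<forall>w \<in> V - set (take j vs).
        \<not> lex_less (lbfs_label adj s vs j (vs ! j)) (lbfs_label adj s vs j w))"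

definition F_tree :: "('v \<Rightarrow> 'v \<Rightarrow> bool) \<Rightarrow> 'v list \<Rightarrow> 'v set set" where
  "F_tree adj vs =
     {{vs ! j, vs ! (LEAST i. i < length vs \<and> adj (vs ! i) (vs ! j))} | j. 0 < j \<and> j < length vs}"

end

theory Submission
  imports Defs "HOL-Library.List_Lexorder"
begin


lemma lex_less_simps[simp]:
  "lex_less [] ys \<longleftrightarrow> ys \<noteq> []"
  "\<not> lex_less xs []"
  "lex_less (a#x) (b#y) \<longleftrightarrow> a < b \<or> a = b \<and> lex_less x y"
  unfolding lex_less_def by (auto simp: neq_Nil_conv)

lemma lex_less_head:
  assumes "\<forall>z\<in>set ys. z < a" shows "\<not> lex_less (a # xs) ys"
  using assms by (cases ys) auto

lemma rhs_shift:
  assumes "P a = Q a"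
  shows "(\<exists>d. a \<le> d \<and> d < j \<and> Q d \<and> \<not> P d \<and> (\<forall>i. a \<le> i \<and> i < d \<longrightarrow> P i = Q i))
     \<longleftrightarrow> (\<exists>d. Suc a \<le> d \<and> d < j \<and> Q d \<and> \<not> P d \<and> (\<forall>i. Suc a \<le> i \<and> i < d \<longrightarrow> P i = Q i))"
proof
  assume "\<exists>d. a \<le> d \<and> d < j \<and> Q d \<and> \<not> P d \<and> (\<forall>i. a \<le> i \<and> i < d \<longrightarrow> P i = Q i)"
  then obtain d where d: "a \<le> d" "d < j" "Q d" "\<not> P d" "\<forall>i. a \<le> i \<and> i < d \<longrightarrow> P i = Q i" by blast
  have "d \<noteq> a" using d assms by auto
  then have "Suc a \<le> d" using d by linarith
  then show "\<exists>d. Suc a \<le> d \<and> d < j \<and> Q d \<and> \<not> P d \<and> (\<forall>i. Suc a \<le> i \<and> i < d \<longrightarrow> P i = Q i)"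
    using d by auto
next
  assume "\<exists>d. Suc a \<le> d \<and> d < j \<and> Q d \<and> \<not> P d \<and> (\<forall>i. Suc a \<le> i \<and> i < d \<longrightarrow> P i = Q i)"
  then obtain d where d: "Suc a \<le> d" "d < j" "Q d" "\<not> P d" "\<forall>i. Suc a \<le> i \<and> i < d \<longrightarrow> P i = Q i" by blast
  have "\<forall>i. a \<le> i \<and> i < d \<longrightarrow> P i = Q i"
  proof (intro allI impI)
    fix i assume "a \<le> i \<and> i < d"
    then show "P i = Q i" using d(5) assms by (cases "i = a") auto
  qed
  then show "\<exists>d. a \<le> d \<and> d < j \<and> Q d \<and> \<not> P d \<and> (\<forall>i. a \<le> i \<and> i < d \<longrightarrow> P i = Q i)"
    using d by (intro exI[of _ d]) auto
qed

lemma lex_filter: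
  assumes "j \<le> n"
  shows "lex_less (map (\<lambda>i. n - (i+1)) (filter P [a..<j])) (map (\<lambda>i. n-(i+1)) (filter Q [a..<j]))
     \<longleftrightarrow> (\<exists>d. a \<le> d \<and> d < j \<and> Q d \<and> \<not> P d \<and> (\<forall>i. a \<le> i \<and> i < d \<longrightarrow> P i = Q i))"
  using assms
proof (induction "j - a" arbitrary: a)
  case 0
  then show ?case by auto
next
  case (Suc m)
  then have aj: "a < j" by auto
  have up: "[a..<j] = a # [Suc a..<j]" using aj upt_conv_Cons by blast
  have IH: "lex_less (map (\<lambda>i. n - (i+1)) (filter P [Suc a..<j])) (map (\<lambda>i. n-(i+1)) (filter Q [Suc a..<j]))
     \<longleftrightarrow> (\<exists>d. Suc a \<le> d \<and> d < j \<and> Q d \<and> \<not> P d \<and> (\<forall>i. Suc a \<le> i \<and> i < d \<longrightarrow> P i = Q i))"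
    using Suc by auto
  have smallP: "\<forall>z\<in>set (map (\<lambda>i. n - (i+1)) (filter R [Suc a..<j])). z < n - (a+1)" for R
    using Suc.prems by auto
  show ?case
  proof (cases "P a")
    case True
    note Pa = True
    show ?thesis
    proof (cases "Q a")
      case True
      have L: "map (\<lambda>i. n - (i+1)) (filter P [a..<j]) = (n - (a+1)) # map (\<lambda>i. n - (i+1)) (filter P [Suc a..<j])"
        using Pa by (simp add: up)
      have R: "map (\<lambda>i. n - (i+1)) (filter Q [a..<j]) = (n - (a+1)) # map (\<lambda>i. n - (i+1)) (filter Q [Suc a..<j])"
        using True by (simp add: up)
      have eq: "P a = Q a" using Pa True by simp
      have "lex_less ((n - (a+1)) # map (\<lambda>i. n - (i+1)) (filter P [Suc a..<j])) ((n - (a+1)) # map (\<lambda>i. n - (i+1)) (filter Q [Suc a..<j]))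
        \<longleftrightarrow> lex_less (map (\<lambda>i. n - (i+1)) (filter P [Suc a..<j])) (map (\<lambda>i. n - (i+1)) (filter Q [Suc a..<j]))"
        by simp
      then show ?thesis unfolding L R IH using rhs_shift[of P a Q j, OF eq] by simp
    next
      case False
      have L: "map (\<lambda>i. n - (i+1)) (filter P [a..<j]) = (n - (a+1)) # map (\<lambda>i. n - (i+1)) (filter P [Suc a..<j])"
        using Pa by (simp add: up)
      have R: "map (\<lambda>i. n - (i+1)) (filter Q [a..<j]) = map (\<lambda>i. n - (i+1)) (filter Q [Suc a..<j])"
        using False by (simp add: up)
      have "\<not> lex_less ((n - (a+1)) # map (\<lambda>i. n - (i+1)) (filter P [Suc a..<j])) (map (\<lambda>i. n-(i+1)) (filter Q [Suc a..<j]))"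
        by (rule lex_less_head) (rule smallP)
      moreover have "\<not> (\<exists>d. a \<le> d \<and> d < j \<and> Q d \<and> \<not> P d \<and> (\<forall>i. a \<le> i \<and> i < d \<longrightarrow> P i = Q i))"
      proof
        assume "\<exists>d. a \<le> d \<and> d < j \<and> Q d \<and> \<not> P d \<and> (\<forall>i. a \<le> i \<and> i < d \<longrightarrow> P i = Q i)"
        then obtain d where d: "a \<le> d" "Q d" "\<not> P d" "\<forall>i. a \<le> i \<and> i < d \<longrightarrow> P i = Q i" by blast
        have "d \<noteq> a" using d Pa by auto
        then have "a < d" using d by linarith
        then show False using d(4) Pa False by auto
      qed
      ultimately show ?thesis unfolding L R by blast
    qed
  next
    case False
    note Pa = False
    show ?thesis
    proof (cases "Q a")
      case True
      have L: "map (\<lambda>i. n - (i+1)) (filter P [a..<j]) = map (\<lambda>i. n - (i+1)) (filter P [Suc a..<j])"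
        using Pa by (simp add: up)
      have R: "map (\<lambda>i. n - (i+1)) (filter Q [a..<j]) = (n - (a+1)) # map (\<lambda>i. n - (i+1)) (filter Q [Suc a..<j])"
        using True by (simp add: up)
      have "lex_less (map (\<lambda>i. n - (i+1)) (filter P [Suc a..<j])) ((n - (a+1)) # map (\<lambda>i. n-(i+1)) (filter Q [Suc a..<j]))"
      proof (cases "filter P [Suc a..<j]")
        case Nil then show ?thesis by simp
      next
        case (Cons b bs)
        then have "b \<in> set (filter P [Suc a..<j])" by simp
        then have "n - (b+1) < n - (a+1)" using Suc.prems by auto
        then show ?thesis using Cons by simp
      qed
      moreover have "(\<exists>d. a \<le> d \<and> d < j \<and> Q d \<and> \<not> P d \<and> (\<forall>i. a \<le> i \<and> i < d \<longrightarrow> P i = Q i))"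
        using Pa True aj by (intro exI[of _ a]) auto
      ultimately show ?thesis unfolding L R by blast
    next
      case False
      have L: "map (\<lambda>i. n - (i+1)) (filter P [a..<j]) = map (\<lambda>i. n - (i+1)) (filter P [Suc a..<j])"
        using Pa by (simp add: up)
      have R: "map (\<lambda>i. n - (i+1)) (filter Q [a..<j]) = map (\<lambda>i. n - (i+1)) (filter Q [Suc a..<j])"
        using False by (simp add: up)
      have eq: "P a = Q a" using Pa False by simp
      show ?thesis unfolding L R IH by (rule rhs_shift[of P a Q j, OF eq, symmetric])
    qed
  qed
qed

lemma first_diff:
  fixes j :: nat
  assumes "\<not> (\<exists>d. d < j \<and> Q d \<and> \<not> P d \<and> (\<forall>i. i < d \<longrightarrow> P i = Q i))"
    and "d < j" "Q d" "\<not> P d"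
  shows "\<exists>d'<d. P d' \<and> \<not> Q d'"
proof (rule ccontr)
  assume H: "\<not> ?thesis"
  define d0 where "d0 = (LEAST i. P i \<noteq> Q i)"
  have ex: "P d \<noteq> Q d" using assms by auto
  have d0le: "d0 \<le> d" unfolding d0_def by (rule Least_le, fact ex)
  have d0: "P d0 \<noteq> Q d0" unfolding d0_def by (rule LeastI, fact ex)
  have lt: "\<forall>i<d0. P i = Q i" unfolding d0_def using not_less_Least by blast
  show False
  proof (cases "d0 = d")
    case True then show ?thesis using assms lt by auto
  next
    case False
    then have "d0 < d" using d0le by auto
    then show ?thesis using H d0 assms lt by (metis order.strict_trans)
  qed
qed

lemma lex_less_irrefl: "\<not> lex_less xs xs"
  by (induct xs) auto

definition vlit :: "nat \<Rightarrow> (nat \<Rightarrow> bool) \<Rightarrow> nat \<Rightarrow> vert" where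
  "vlit k \<sigma> d = (if d = 0 then Rv else if d = 1 then Pv else if d < 2+k then Lit (d-2) (\<sigma> (d-2))
     else if d = 2+k then Qv else Lit (2+2*k-d) (\<not> \<sigma> (2+2*k-d)))"

definition ckey :: "nat \<Rightarrow> literal list list \<Rightarrow> (nat \<Rightarrow> bool) \<Rightarrow> nat \<Rightarrow> nat list" where
  "ckey k cls \<sigma> i = map (\<lambda>d. (3+2*k) - (d+1)) (filter (\<lambda>d. G_adj k cls (vlit k \<sigma> d) (Cv i)) [0..<3+2*k])"

lemma V_simps[simp]:
  "Lit j b \<in> G_verts k cls \<longleftrightarrow> j < k" "Av i \<in> G_verts k cls \<longleftrightarrow> i < length cls"
  "Cv i \<in> G_verts k cls \<longleftrightarrow> i < length cls" "Tv i \<in> G_verts k cls \<longleftrightarrow> i < length cls"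
  "Rv \<in> G_verts k cls" "Pv \<in> G_verts k cls" "Qv \<in> G_verts k cls" "Uv \<in> G_verts k cls"
  by (auto simp: G_verts_def)





lemmas adjU = G_adj_def G_edge0_def is_T_def is_X_def

lemma adj_c[simp]:
  "G_adj k cls (Lit j b) (Lit j' b') \<longleftrightarrow> j<k \<and> j'<k \<and> j\<noteq>j'"
  "G_adj k cls (Lit j b) (Av i') \<longleftrightarrow> False"
  "G_adj k cls (Lit j b) (Cv i') \<longleftrightarrow> j<k \<and> i'<length cls \<and> (j,b) \<in> set (cls!i')"
  "G_adj k cls (Lit j b) (Tv i') \<longleftrightarrow> False"
  "G_adj k cls (Lit j b) (Rv) \<longleftrightarrow> j<k"
  "G_adj k cls (Lit j b) (Pv) \<longleftrightarrow> j<k"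
  "G_adj k cls (Lit j b) (Qv) \<longleftrightarrow> j<k"
  "G_adj k cls (Lit j b) (Uv) \<longleftrightarrow> j<k"
  "G_adj k cls (Av i) (Lit j' b') \<longleftrightarrow> False"
  "G_adj k cls (Av i) (Av i') \<longleftrightarrow> False"
  "G_adj k cls (Av i) (Cv i') \<longleftrightarrow> i<length cls \<and> i=i'"
  "G_adj k cls (Av i) (Tv i') \<longleftrightarrow> i<length cls \<and> i=i'"
  "G_adj k cls (Av i) (Rv) \<longleftrightarrow> i<length cls"
  "G_adj k cls (Av i) (Pv) \<longleftrightarrow> False"
  "G_adj k cls (Av i) (Qv) \<longleftrightarrow> i<length cls"
  "G_adj k cls (Av i) (Uv) \<longleftrightarrow> i<length cls"
  "G_adj k cls (Cv i) (Lit j' b') \<longleftrightarrow> j'<k \<and> i<length cls \<and> (j',b') \<in> set (cls!i)"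
  "G_adj k cls (Cv i) (Av i') \<longleftrightarrow> i'<length cls \<and> i'=i"
  "G_adj k cls (Cv i) (Cv i') \<longleftrightarrow> False"
  "G_adj k cls (Cv i) (Tv i') \<longleftrightarrow> i<length cls \<and> i=i'"
  "G_adj k cls (Cv i) (Rv) \<longleftrightarrow> i<length cls"
  "G_adj k cls (Cv i) (Pv) \<longleftrightarrow> False"
  "G_adj k cls (Cv i) (Qv) \<longleftrightarrow> False"
  "G_adj k cls (Cv i) (Uv) \<longleftrightarrow> i<length cls"
  "G_adj k cls (Tv i) (Lit j' b') \<longleftrightarrow> False"
  "G_adj k cls (Tv i) (Av i') \<longleftrightarrow> i'<length cls \<and> i'=i"
  "G_adj k cls (Tv i) (Cv i') \<longleftrightarrow> i'<length cls \<and> i'=i"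
  "G_adj k cls (Tv i) (Tv i') \<longleftrightarrow> False"
  "G_adj k cls (Tv i) (Rv) \<longleftrightarrow> False"
  "G_adj k cls (Tv i) (Pv) \<longleftrightarrow> False"
  "G_adj k cls (Tv i) (Qv) \<longleftrightarrow> False"
  "G_adj k cls (Tv i) (Uv) \<longleftrightarrow> False"
  "G_adj k cls (Rv) (Lit j' b') \<longleftrightarrow> j'<k"
  "G_adj k cls (Rv) (Av i') \<longleftrightarrow> i'<length cls"
  "G_adj k cls (Rv) (Cv i') \<longleftrightarrow> i'<length cls"
  "G_adj k cls (Rv) (Tv i') \<longleftrightarrow> False"
  "G_adj k cls (Rv) (Rv) \<longleftrightarrow> False"
  "G_adj k cls (Rv) (Pv) \<longleftrightarrow> True"
  "G_adj k cls (Rv) (Qv) \<longleftrightarrow> True"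
  "G_adj k cls (Rv) (Uv) \<longleftrightarrow> False"
  "G_adj k cls (Pv) (Lit j' b') \<longleftrightarrow> j'<k"
  "G_adj k cls (Pv) (Av i') \<longleftrightarrow> False"
  "G_adj k cls (Pv) (Cv i') \<longleftrightarrow> False"
  "G_adj k cls (Pv) (Tv i') \<longleftrightarrow> False"
  "G_adj k cls (Pv) (Rv) \<longleftrightarrow> True"
  "G_adj k cls (Pv) (Pv) \<longleftrightarrow> False"
  "G_adj k cls (Pv) (Qv) \<longleftrightarrow> True"
  "G_adj k cls (Pv) (Uv) \<longleftrightarrow> True"
  "G_adj k cls (Qv) (Lit j' b') \<longleftrightarrow> j'<k"
  "G_adj k cls (Qv) (Av i') \<longleftrightarrow> i'<length cls"
  "G_adj k cls (Qv) (Cv i') \<longleftrightarrow> False"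
  "G_adj k cls (Qv) (Tv i') \<longleftrightarrow> False"
  "G_adj k cls (Qv) (Rv) \<longleftrightarrow> True"
  "G_adj k cls (Qv) (Pv) \<longleftrightarrow> True"
  "G_adj k cls (Qv) (Qv) \<longleftrightarrow> False"
  "G_adj k cls (Qv) (Uv) \<longleftrightarrow> True"
  "G_adj k cls (Uv) (Lit j' b') \<longleftrightarrow> j'<k"
  "G_adj k cls (Uv) (Av i') \<longleftrightarrow> i'<length cls"
  "G_adj k cls (Uv) (Cv i') \<longleftrightarrow> i'<length cls"
  "G_adj k cls (Uv) (Tv i') \<longleftrightarrow> False"
  "G_adj k cls (Uv) (Rv) \<longleftrightarrow> False"
  "G_adj k cls (Uv) (Pv) \<longleftrightarrow> True"
  "G_adj k cls (Uv) (Qv) \<longleftrightarrow> True"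
  "G_adj k cls (Uv) (Uv) \<longleftrightarrow> False"
  by (auto simp: adjU)


locale constr =
  fixes k :: nat and cls :: "literal list list" and \<sigma> :: "nat \<Rightarrow> bool" and ord :: "nat list"
  assumes inst: "sat3_instance k cls" and sat: "satisfies \<sigma> cls"
    and dist: "distinct ord" and setord: "set ord = {0..<length cls}"
    and srt: "\<forall>e e'. e < e' \<longrightarrow> e' < length cls \<longrightarrow> \<not> lex_less (ckey k cls \<sigma> (ord!e)) (ckey k cls \<sigma> (ord!e'))"
begin

abbreviation "l \<equiv> length cls"
abbreviation "V \<equiv> G_verts k cls"
abbreviation "adj \<equiv> G_adj k cls"
definition "n = 4 + 2*k + 3*l"

lemma len: "length ord = l" using distinct_card[OF dist] setord by simp

definition idx :: "nat \<Rightarrow> nat" where "idx i = (THE e. e < l \<and> ord!e = i)"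

lemma idx: assumes "i < l" shows "idx i < l \<and> ord ! idx i = i"
proof -
  have "i \<in> set ord" using setord assms by auto
  then obtain e where e: "e < l" "ord!e = i" using len by (auto simp: in_set_conv_nth)
  have "\<exists>!e. e < l \<and> ord!e = i"
  proof (intro ex1I[of _ e])
    show "e < l \<and> ord ! e = i" using e by auto
    fix y assume "y < l \<and> ord ! y = i"
    then show "y = e" using e dist len nth_eq_iff_index_eq by metis
  qed
  then show ?thesis unfolding idx_def by (rule theI')
qed

lemma idx_lt[simp]: "i < l \<Longrightarrow> idx i < l" using idx by blast

lemma ord_lt: "e < l \<Longrightarrow> ord!e < l"
  using setord len nth_mem by fastforce

lemma idx_nth: assumes "e < l" shows "idx (ord!e) = e"
proof -
  have "idx (ord!e) < l" "ord ! idx (ord!e) = ord!e" using idx[OF ord_lt[OF assms]] by auto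
  then show ?thesis using nth_eq_iff_index_eq[OF dist] assms len by metis
qed

definition vof :: "nat \<Rightarrow> vert" where
  "vof d = (if d < 3+2*k then vlit k \<sigma> d else if d < 3+2*k+l then Cv (ord!(d-(3+2*k)))
     else if d < 3+2*k+2*l then Av (ord!(d-(3+2*k+l))) else if d = 3+2*k+2*l then Uv
     else Tv (ord!(d-(4+2*k+2*l))))"

definition pos :: "vert \<Rightarrow> nat" where
  "pos v = (case v of Rv \<Rightarrow> 0 | Pv \<Rightarrow> 1 | Lit j b \<Rightarrow> if b = \<sigma> j then 2+j else 2+2*k-j
     | Qv \<Rightarrow> 2+k | Cv i \<Rightarrow> 3+2*k+idx i | Av i \<Rightarrow> 3+2*k+l+idx i | Uv \<Rightarrow> 3+2*k+2*l
     | Tv i \<Rightarrow> 4+2*k+2*l+idx i)"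

lemma pos_vof: assumes "v \<in> V" shows "pos v < n \<and> vof (pos v) = v"
proof (cases v)
  case (Lit j b)
  then have j: "j < k" using assms by simp
  show ?thesis
  proof (cases "b = \<sigma> j")
    case True
    then have p: "pos v = 2 + j" using Lit by (simp add: pos_def)
    have "vof (2+j) = Lit j (\<sigma> j)" using j by (simp add: vof_def vlit_def)
    then show ?thesis using p True Lit j by (simp add: n_def)
  next
    case False
    then have p: "pos v = 2+2*k-j" using Lit by (simp add: pos_def)
    have a: "2+2*k-j \<noteq> 0" "2+2*k-j \<noteq> 1" "\<not> 2+2*k-j < 2+k" "2+2*k-j \<noteq> 2+k" "2+2*k-j < 3+2*k"
      "2+2*k-(2+2*k-j) = j" using j by linarith+
    have "vof (2+2*k-j) = Lit j (\<not> \<sigma> j)" unfolding vof_def vlit_def using a by simp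
    then show ?thesis using p False Lit j by (simp add: n_def)
  qed
next
  case (Av i)
  then have i: "i < l" using assms by simp
  have p: "pos v = 3+2*k+l+idx i" using Av by (simp add: pos_def)
  have "vof (3+2*k+l+idx i) = Av i" using idx[OF i] by (simp add: vof_def)
  then show ?thesis using p Av idx[OF i] by (simp add: n_def)
next
  case (Cv i)
  then have i: "i < l" using assms by simp
  have p: "pos v = 3+2*k+idx i" using Cv by (simp add: pos_def)
  have "vof (3+2*k+idx i) = Cv i" using idx[OF i] by (simp add: vof_def)
  then show ?thesis using p Cv idx[OF i] by (simp add: n_def)
next
  case (Tv i)
  then have i: "i < l" using assms by simp
  have p: "pos v = 4+2*k+2*l+idx i" using Tv by (simp add: pos_def)
  have "vof (4+2*k+2*l+idx i) = Tv i" using idx[OF i] by (simp add: vof_def)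
  then show ?thesis using p Tv idx[OF i] by (simp add: n_def)
qed (simp_all add: pos_def vof_def vlit_def n_def)

lemma vof_pos: assumes "d < n" shows "vof d \<in> V \<and> pos (vof d) = d"
proof -
  consider "d = 0" | "d = 1" | "2 \<le> d" "d < 2+k" | "d = 2+k" | "2+k < d" "d < 3+2*k"
    | "3+2*k \<le> d" "d < 3+2*k+l" | "3+2*k+l \<le> d" "d < 3+2*k+2*l"
    | "d = 3+2*k+2*l" | "3+2*k+2*l < d" by linarith
  then show ?thesis
  proof cases
    case 3
    then have "vof d = Lit (d-2) (\<sigma> (d-2))" by (simp add: vof_def vlit_def)
    moreover have "d - 2 < k" "2 + (d-2) = d" using 3 by linarith+
    ultimately show ?thesis by (simp add: pos_def)
  next
    case 5
    then have "vof d = Lit (2+2*k-d) (\<not> \<sigma> (2+2*k-d))" by (simp add: vof_def vlit_def)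
    moreover have "2+2*k-d < k" "2+2*k-(2+2*k-d) = d" using 5 by linarith+
    ultimately show ?thesis by (simp add: pos_def)
  next
    case 6
    then have "vof d = Cv (ord!(d-(3+2*k)))" by (simp add: vof_def)
    then show ?thesis using 6 ord_lt[of "d-(3+2*k)"] idx_nth[of "d-(3+2*k)"] by (simp add: pos_def)
  next
    case 7
    then have "vof d = Av (ord!(d-(3+2*k+l)))" by (simp add: vof_def)
    then show ?thesis using 7 ord_lt[of "d-(3+2*k+l)"] idx_nth[of "d-(3+2*k+l)"] by (simp add: pos_def)
  next
    case 9
    then have "vof d = Tv (ord!(d-(4+2*k+2*l)))" by (simp add: vof_def)
    then show ?thesis using 9 assms ord_lt[of "d-(4+2*k+2*l)"] idx_nth[of "d-(4+2*k+2*l)"]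
      by (simp add: pos_def n_def)
  qed (simp_all add: pos_def vof_def vlit_def)
qed

lemma vlit_pos: "d < 3+2*k \<Longrightarrow> vlit k \<sigma> d \<in> V \<and> pos (vlit k \<sigma> d) = d"
  using vof_pos[of d] by (simp add: vof_def n_def)

lemma C_order:
  assumes "i < l" "i' < l" "idx i < idx i'" "d < 3+2*k"
    "adj (vlit k \<sigma> d) (Cv i')" "\<not> adj (vlit k \<sigma> d) (Cv i)"
  shows "\<exists>d'<d. adj (vlit k \<sigma> d') (Cv i) \<and> \<not> adj (vlit k \<sigma> d') (Cv i')"
proof -
  have "\<not> lex_less (ckey k cls \<sigma> (ord!idx i)) (ckey k cls \<sigma> (ord!idx i'))"
    using srt idx[OF assms(2)] assms(3) by blast
  then have nl: "\<not> lex_less (ckey k cls \<sigma> i) (ckey k cls \<sigma> i')"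
    using idx[OF assms(1)] idx[OF assms(2)] by simp
  have "\<not> (\<exists>d. 0 \<le> d \<and> d < 3+2*k \<and> adj (vlit k \<sigma> d) (Cv i') \<and> \<not> adj (vlit k \<sigma> d) (Cv i)
     \<and> (\<forall>j. 0 \<le> j \<and> j < d \<longrightarrow> adj (vlit k \<sigma> j) (Cv i) = adj (vlit k \<sigma> j) (Cv i')))"
    using nl unfolding ckey_def lex_filter[OF order_refl] .
  then have "\<not> (\<exists>d. d < 3+2*k \<and> adj (vlit k \<sigma> d) (Cv i') \<and> \<not> adj (vlit k \<sigma> d) (Cv i)
     \<and> (\<forall>j. j < d \<longrightarrow> adj (vlit k \<sigma> j) (Cv i) = adj (vlit k \<sigma> j) (Cv i')))"
    by simp
  from first_diff[OF this assms(4) assms(5) assms(6)] show ?thesis .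
qed

lemma truelit: assumes "i < l" shows "\<exists>jj<k. adj (Lit jj (\<sigma> jj)) (Cv i)"
proof -
  have "cls!i \<in> set cls" using assms by simp
  then obtain jj bb where jb: "(jj, bb) \<in> set (cls!i)" "\<sigma> jj = bb" using sat unfolding satisfies_def by blast
  have "jj < k" using inst jb \<open>cls!i \<in> set cls\<close> unfolding sat3_instance_def by blast
  then show ?thesis using jb assms by (intro exI[of _ jj]) auto
qed

lemma wit: "y \<in> V \<Longrightarrow> pos y < pos x \<Longrightarrow> adj y v \<Longrightarrow> \<not> adj y w \<Longrightarrow> \<exists>y\<in>V. pos y < pos x \<and> adj y v \<and> \<not> adj y w"
  by blast

lemma four:
  assumes V: "v \<in> V" "w \<in> V" "x \<in> V" and o: "pos v < pos w" "pos x < pos v"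
    and a: "adj x w" "\<not> adj x v"
  shows "\<exists>y\<in>V. pos y < pos x \<and> adj y v \<and> \<not> adj y w"
proof (cases v)
  case Rv
  then show ?thesis using o by (simp add: pos_def)
next
  case Pv
  then show ?thesis using o a V by (cases x) (auto simp: pos_def)
next
  case Qv
  then show ?thesis using o a V by (cases x) (auto simp: pos_def split: if_splits)
next
  case Uv
  then show ?thesis using o a V by (cases x; cases w) (auto simp: pos_def split: if_splits dest: idx_lt)
next
  case (Lit j b)
  have j: "j < k" using V Lit by simp
  show ?thesis
  proof (cases "b = \<sigma> j")
    case True
    then show ?thesis using o a V Lit by (cases x) (auto simp: pos_def split: if_splits)
  next
    case False
    have xe: "x = Lit j (\<sigma> j)" using o a V Lit False by (cases x) (auto simp: pos_def split: if_splits)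
    show ?thesis
    proof (cases w)
      case (Lit j' b')
      then have w: "b' \<noteq> \<sigma> j'" "j' < j" "j' < k" using o a V xe \<open>v = Lit j b\<close> False j
        by (auto simp: pos_def split: if_splits)
      show ?thesis
        by (rule wit[of "Lit j' (\<sigma> j')"]) (use w xe Lit \<open>v = Lit j b\<close> j in \<open>auto simp: pos_def\<close>)
    next
      case (Cv i)
      show ?thesis
        by (rule wit[of Pv]) (use xe Cv \<open>v = Lit j b\<close> j in \<open>auto simp: pos_def\<close>)
    next
      case Uv
      show ?thesis
        by (rule wit[of Rv]) (use xe Uv \<open>v = Lit j b\<close> j in \<open>auto simp: pos_def\<close>)
    qed (use o a V xe \<open>v = Lit j b\<close> False j in \<open>auto simp: pos_def split: if_splits\<close>)
  qed
next
  case (Cv i)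
  have i: "i < l" using V Cv by simp
  show ?thesis
  proof (cases x)
    case Pv
    have "w = Uv" using o a V Pv Cv by (cases w) (auto simp: pos_def split: if_splits)
    then show ?thesis
      by (intro wit[of Rv]) (use Pv Cv i in \<open>auto simp: pos_def\<close>)
  next
    case (Lit jx bx)
    have jx: "jx < k" using V Lit by simp
    have d: "pos x < 3+2*k" using Lit jx by (auto simp: pos_def)
    have xv: "vlit k \<sigma> (pos x) = x" using pos_vof[OF V(3)] d by (simp add: vof_def)
    show ?thesis
    proof (cases w)
      case (Cv i')
      have i': "i' < l" using V Cv by simp
      have ii: "idx i < idx i'" using o \<open>v = Cv i\<close> Cv by (simp add: pos_def)
      obtain d' where d': "d' < pos x" "adj (vlit k \<sigma> d') (Cv i)" "\<not> adj (vlit k \<sigma> d') (Cv i')"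
        using C_order[OF i i' ii d] a xv Cv \<open>v = Cv i\<close> by auto
      have "vlit k \<sigma> d' \<in> V \<and> pos (vlit k \<sigma> d') = d'" using vlit_pos d' d by simp
      then show ?thesis using d' Cv \<open>v = Cv i\<close> by (intro wit[of "vlit k \<sigma> d'"]) auto
    next
      case Uv
      show ?thesis
        by (rule wit[of Rv]) (use Lit Uv \<open>v = Cv i\<close> i jx in \<open>auto simp: pos_def split: if_splits\<close>)
    qed (use o a V Lit \<open>v = Cv i\<close> i jx in \<open>auto simp: pos_def split: if_splits\<close>)
  next
    case Qv
    obtain jj where jj: "jj < k" "adj (Lit jj (\<sigma> jj)) (Cv i)" using truelit[OF i] by blast
    show ?thesis
    proof (cases w)
      case (Av i')
      show ?thesis
        by (rule wit[of "Lit jj (\<sigma> jj)"]) (use jj Av Qv \<open>v = Cv i\<close> i in \<open>auto simp: pos_def\<close>)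
    next
      case Uv
      show ?thesis
        by (rule wit[of Rv]) (use Qv Uv \<open>v = Cv i\<close> i in \<open>auto simp: pos_def split: if_splits\<close>)
    qed (use o a V Qv \<open>v = Cv i\<close> i in \<open>auto simp: pos_def split: if_splits\<close>)
  next
    case (Cv i'')
    obtain jj where jj: "jj < k" "adj (Lit jj (\<sigma> jj)) (Cv i)" using truelit[OF i] by blast
    show ?thesis
    proof (cases w)
      case (Av i')
      show ?thesis
        by (rule wit[of "Lit jj (\<sigma> jj)"]) (use jj Av Cv \<open>v = Cv i\<close> i in \<open>auto simp: pos_def\<close>)
    next
      case Uv
      show ?thesis
        by (rule wit[of Rv]) (use Cv Uv \<open>v = Cv i\<close> i V in \<open>auto simp: pos_def split: if_splits\<close>)
    next
      case (Tv i')
      show ?thesis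
        by (rule wit[of Rv]) (use Cv Tv \<open>v = Cv i\<close> i V in \<open>auto simp: pos_def split: if_splits\<close>)
    qed (use o a V Cv \<open>v = Cv i\<close> i in \<open>auto simp: pos_def split: if_splits\<close>)
  qed (use o a V \<open>v = Cv i\<close> i idx_lt[OF i] in \<open>auto simp: pos_def split: if_splits\<close>)
next
  case (Av i)
  have i: "i < l" using V Av by simp
  show ?thesis
  proof (cases x)
    case (Cv i'')
    show ?thesis
    proof (cases w)
      case (Av i')
      have "i' = i''" using a Av Cv by simp
      then have ii: "idx i < idx i''" using o Av \<open>v = Av i\<close> by (simp add: pos_def)
      show ?thesis
        by (rule wit[of "Cv i"]) (use ii Av Cv \<open>v = Av i\<close> i \<open>i' = i''\<close> a in \<open>auto simp: pos_def\<close>)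
    next
      case Uv
      show ?thesis
        by (rule wit[of Rv]) (use Cv Uv \<open>v = Av i\<close> i V in \<open>auto simp: pos_def split: if_splits\<close>)
    next
      case (Tv i')
      show ?thesis
        by (rule wit[of Rv]) (use Cv Tv \<open>v = Av i\<close> i V in \<open>auto simp: pos_def split: if_splits\<close>)
    qed (use o a V Cv \<open>v = Av i\<close> i in \<open>auto simp: pos_def split: if_splits\<close>)
  next
    case Rv
    then show ?thesis using a \<open>v = Av i\<close> i by simp
  next
    case Qv
    then show ?thesis using a \<open>v = Av i\<close> i by simp
  next
    case (Tv i'')
    then show ?thesis using o \<open>v = Av i\<close> idx_lt[OF i] by (simp add: pos_def)
  next
    case Uv
    then show ?thesis using o \<open>v = Av i\<close> i idx_lt[OF i] by (simp add: pos_def)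
  next
    case Pv
    have "w = Uv" using o a(1) V(2) Pv \<open>v = Av i\<close> idx_lt[OF i]
      by (cases w) (auto simp: pos_def split: if_splits)
    then show ?thesis by (intro wit[of Rv]) (use Pv \<open>v = Av i\<close> i in \<open>auto simp: pos_def\<close>)
  next
    case (Lit jx bx)
    have jx: "jx < k" using V Lit by simp
    have "w = Uv" using o a(1) V(2) Lit \<open>v = Av i\<close> idx_lt[OF i] jx
      by (cases w) (auto simp: pos_def split: if_splits dest: idx_lt)
    then show ?thesis by (intro wit[of Rv]) (use Lit jx \<open>v = Av i\<close> i in \<open>auto simp: pos_def split: if_splits\<close>)
  next
    case (Av i'')
    have "w = Uv \<or> w = Tv i''" using a(1) V(2) Av o \<open>v = Av i\<close> idx_lt[OF i]
      by (cases w) (auto simp: pos_def)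
    then show ?thesis by (intro wit[of Rv]) (use Av \<open>v = Av i\<close> i V(3) in \<open>auto simp: pos_def\<close>)
  qed
next
  case (Tv i)
  have i: "i < l" using V Tv by simp
  obtain i' where w: "w = Tv i'" "i' < l" using o(1) V(2) Tv i by (cases w) (auto simp: pos_def split: if_splits dest: idx_lt)
  have ii: "idx i < idx i'" using o w Tv by (simp add: pos_def)
  have x: "x = Av i' \<or> x = Cv i'" using a(1) w by (cases x) auto
  then have "pos (Cv i) < pos x" using ii by (auto simp: pos_def)
  moreover have "i \<noteq> i'" using ii by auto
  ultimately show ?thesis
    by (intro wit[of "Cv i"]) (use w Tv i in \<open>auto\<close>)
qed

definition vs :: "vert list" where "vs = map vof [0..<n]"

lemma len_vs: "length vs = n" by (simp add: vs_def)
lemma nth_vs: "d < n \<Longrightarrow> vs ! d = vof d" by (simp add: vs_def)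

lemma set_vs: "set vs = V"
proof
  show "set vs \<subseteq> V" using vof_pos by (auto simp: vs_def)
  show "V \<subseteq> set vs"
  proof
    fix v assume "v \<in> V"
    then have "pos v < n" "vof (pos v) = v" using pos_vof by auto
    then have "pos v \<in> {0..<n}" by simp
    then have "vof (pos v) \<in> vof ` {0..<n}" by (rule imageI)
    then show "v \<in> set vs" using \<open>vof (pos v) = v\<close> by (simp add: vs_def)
  qed
qed

lemma dist_vs: "distinct vs"
proof -
  have "inj_on vof {0..<n}" by (rule inj_on_inverseI[of _ pos]) (use vof_pos in auto)
  then show ?thesis by (simp add: vs_def distinct_map)
qed

lemma take_vs: "j \<le> n \<Longrightarrow> set (take j vs) = vof ` {0..<j}"
  by (simp add: vs_def take_map)

lemma pos_R[simp]: "pos Rv = 0" by (simp add: pos_def)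

lemma pos_zero: "v \<in> V \<Longrightarrow> pos v = 0 \<longleftrightarrow> v = Rv"
  by (cases v) (auto simp: pos_def split: if_splits)

lemma label:
  assumes "j < n" "z \<noteq> Rv"
  shows "lbfs_label adj Rv vs j z = map (\<lambda>i. n - (i+1)) (filter (\<lambda>i. adj (vof i) z) [0..<j])"
proof -
  have "filter (\<lambda>i. adj (vs ! i) z) [0..<j] = filter (\<lambda>i. adj (vof i) z) [0..<j]"
    using assms(1) by (intro filter_cong) (auto simp: nth_vs)
  then show ?thesis using assms by (simp add: lbfs_label_def len_vs)
qed

lemma lbfs: "is_lbfs V adj vs"
  unfolding is_lbfs_def
proof (intro conjI dist_vs set_vs bexI[of _ Rv] allI impI ballI)
  show "Rv \<in> V" by simp
  fix j w assume j: "j < length vs" and w: "w \<in> V - set (take j vs)"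
  have jn: "j < n" using j len_vs by simp
  have wV: "w \<in> V" and pw: "pos w < n" "vof (pos w) = w" using w pos_vof by auto
  have jw: "j \<le> pos w"
  proof (rule ccontr)
    assume "\<not> j \<le> pos w"
    then have "pos w \<in> {0..<j}" by simp
    then have "w \<in> vof ` {0..<j}" using pw(2) by (metis image_eqI)
    then have "w \<in> set (take j vs)" using take_vs[of j] jn by simp
    then show False using w by simp
  qed
  have vj: "vs ! j = vof j" using jn nth_vs by simp
  have vV: "vof j \<in> V" "pos (vof j) = j" using vof_pos jn by auto
  show "\<not> lex_less (lbfs_label adj Rv vs j (vs ! j)) (lbfs_label adj Rv vs j w)"
  proof (cases "pos w = j")
    case True
    then have "w = vs ! j" using pw vj by simp
    then show ?thesis using lex_less_irrefl by simp
  next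
    case False
    then have jw': "j < pos w" using jw by simp
    have wR: "w \<noteq> Rv" using jw' wV pos_zero by auto
    show ?thesis
    proof (cases "j = 0")
      case True
      have "vof 0 = Rv" by (simp add: vof_def vlit_def)
      then show ?thesis using True vj wR by (simp add: lbfs_label_def)
    next
      case False
      have vR: "vof j \<noteq> Rv" using False vV pos_zero by auto
      let ?P = "\<lambda>i. adj (vof i) (vof j)" and ?Q = "\<lambda>i. adj (vof i) w"
      have "\<not> (\<exists>d. 0 \<le> d \<and> d < j \<and> ?Q d \<and> \<not> ?P d \<and> (\<forall>i. 0 \<le> i \<and> i < d \<longrightarrow> ?P i = ?Q i))"
      proof
        assume "\<exists>d. 0 \<le> d \<and> d < j \<and> ?Q d \<and> \<not> ?P d \<and> (\<forall>i. 0 \<le> i \<and> i < d \<longrightarrow> ?P i = ?Q i)"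
        then obtain d where d: "d < j" "?Q d" "\<not> ?P d" "\<forall>i. i < d \<longrightarrow> ?P i = ?Q i" by auto
        have xV: "vof d \<in> V" "pos (vof d) = d" using vof_pos d(1) jn by auto
        obtain y where y: "y \<in> V" "pos y < d" "adj y (vof j)" "\<not> adj y w"
          using four[OF vV(1) wV xV(1)] jw' vV(2) xV(2) d by auto
        have "vof (pos y) = y" using pos_vof y(1) by simp
        then show False using d(4) y by metis
      qed
      then show ?thesis
        using vj label[OF jn vR] label[OF jn wR] lex_filter[of j n "?P" 0 "?Q"] jn by simp
    qed
  qed
qed

fun par :: "vert \<Rightarrow> vert" where
  "par (Tv i) = Cv i" | "par Uv = Pv" | "par _ = Rv"

lemma par_facts:
  assumes "v \<in> V" "v \<noteq> Rv"
  shows "par v \<in> V \<and> adj (par v) v \<and> (\<forall>u\<in>V. adj u v \<longrightarrow> pos (par v) \<le> pos u)"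
proof (cases v)
  case (Tv i)
  have "\<forall>u\<in>V. adj u v \<longrightarrow> pos (par v) \<le> pos u"
  proof (intro ballI impI)
    fix u assume "u \<in> V" "adj u v"
    then have "u = Av i \<or> u = Cv i" using Tv by (cases u) auto
    then show "pos (par v) \<le> pos u" using Tv by (auto simp: pos_def)
  qed
  then show ?thesis using Tv assms by auto
next
  case Uv
  have "\<forall>u\<in>V. adj u v \<longrightarrow> pos (par v) \<le> pos u"
  proof (intro ballI impI)
    fix u assume "u \<in> V" "adj u v"
    then have "u \<noteq> Rv" using Uv by auto
    then have "pos u \<noteq> 0" using pos_zero \<open>u \<in> V\<close> by auto
    then show "pos (par v) \<le> pos u" using Uv by (simp add: pos_def)
  qed
  then show ?thesis using Uv assms by auto
qed (use assms in \<open>auto simp: pos_def\<close>)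

lemma par_R: "v \<in> V \<Longrightarrow> v \<noteq> Rv \<Longrightarrow> \<not> (v = Uv \<or> (\<exists>i. v = Tv i)) \<Longrightarrow> par v = Rv \<and> adj Rv v"
  by (cases v) auto

lemma least_par:
  assumes "0 < j" "j < n"
  shows "vs ! (LEAST i. i < length vs \<and> adj (vs!i) (vs!j)) = par (vof j)"
proof -
  let ?v = "vof j"
  have vV: "?v \<in> V" "pos ?v = j" using vof_pos assms by auto
  have vR: "?v \<noteq> Rv" using vV pos_zero assms by auto
  note pf = par_facts[OF vV(1) vR]
  have pp: "pos (par ?v) < n" "vof (pos (par ?v)) = par ?v" using pos_vof pf by auto
  have "(LEAST i. i < length vs \<and> adj (vs!i) (vs!j)) = pos (par ?v)"
  proof (rule Least_equality)
    show "pos (par ?v) < length vs \<and> adj (vs ! pos (par ?v)) (vs ! j)"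
      using pp pf assms by (simp add: len_vs nth_vs)
  next
    fix y assume "y < length vs \<and> adj (vs ! y) (vs ! j)"
    then have y: "y < n" "adj (vof y) ?v" using assms by (auto simp: len_vs nth_vs)
    have "vof y \<in> V" "pos (vof y) = y" using vof_pos y(1) by auto
    then show "pos (par ?v) \<le> y" using pf y(2) by metis
  qed
  then show ?thesis using pp by (simp add: nth_vs)
qed

lemma ftree: "F_tree adj vs = T_edges k cls"
proof -
  have eq: "{vs!j, vs!(LEAST i. i < length vs \<and> adj (vs!i) (vs!j))} = {vof j, par (vof j)}"
    if "0 < j" "j < n" for j using least_par[OF that] nth_vs[OF that(2)] by simp
  have "F_tree adj vs = {{vof j, par (vof j)} | j. 0 < j \<and> j < n}"
    unfolding F_tree_def
  proof (rule Collect_cong)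
    fix e
    show "(\<exists>j. e = {vs!j, vs!(LEAST i. i < length vs \<and> adj (vs!i) (vs!j))} \<and> 0 < j \<and> j < length vs)
      \<longleftrightarrow> (\<exists>j. e = {vof j, par (vof j)} \<and> 0 < j \<and> j < n)"
    proof
      assume "\<exists>j. e = {vs!j, vs!(LEAST i. i < length vs \<and> adj (vs!i) (vs!j))} \<and> 0 < j \<and> j < length vs"
      then obtain j where e1: "e = {vs!j, vs!(LEAST i. i < length vs \<and> adj (vs!i) (vs!j))}" and j: "0 < j" "j < length vs"
        by blast
      have jn: "j < n" using j len_vs by simp
      have e2: "e = {vof j, par (vof j)}" using e1 eq[OF j(1) jn] by (rule trans)
      show "\<exists>j. e = {vof j, par (vof j)} \<and> 0 < j \<and> j < n" by (intro exI[of _ j] conjI e2 j(1) jn)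
    next
      assume "\<exists>j. e = {vof j, par (vof j)} \<and> 0 < j \<and> j < n"
      then obtain j where e1: "e = {vof j, par (vof j)}" and j: "0 < j" "j < n" by blast
      have jn: "j < length vs" using j len_vs by simp
      have e2: "e = {vs!j, vs!(LEAST i. i < length vs \<and> adj (vs!i) (vs!j))}" using e1 eq[OF j] by simp
      show "\<exists>j. e = {vs!j, vs!(LEAST i. i < length vs \<and> adj (vs!i) (vs!j))} \<and> 0 < j \<and> j < length vs"
        by (intro exI[of _ j] conjI e2 j(1) jn)
    qed
  qed
  also have "\<dots> = {{v, par v} | v. v \<in> V \<and> v \<noteq> Rv}"
  proof (intro equalityI subsetI)
    fix e assume "e \<in> {{vof j, par (vof j)} | j. 0 < j \<and> j < n}"
    then obtain j where e: "e = {vof j, par (vof j)}" and j: "0 < j" "j < n" by blast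
    have vj: "vof j \<in> V" "pos (vof j) = j" using vof_pos j(2) by auto
    have "vof j \<noteq> Rv" using vj j(1) by auto
    then show "e \<in> {{v, par v} | v. v \<in> V \<and> v \<noteq> Rv}"
      by (intro CollectI exI[of _ "vof j"] conjI e vj(1))
  next
    fix e assume "e \<in> {{v, par v} | v. v \<in> V \<and> v \<noteq> Rv}"
    then obtain v where v: "e = {v, par v}" "v \<in> V" "v \<noteq> Rv" by blast
    have p: "pos v < n" "vof (pos v) = v" using pos_vof v(2) by auto
    have p0: "0 < pos v" using pos_zero v(2,3) by auto
    have e: "e = {vof (pos v), par (vof (pos v))}" using v(1) p(2) by simp
    show "e \<in> {{vof j, par (vof j)} | j. 0 < j \<and> j < n}"
      by (intro CollectI exI[of _ "pos v"] conjI e p0 p(1))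
  qed
  also have "\<dots> = T_edges k cls"
  proof (intro equalityI subsetI)
    fix e assume "e \<in> {{v, par v} | v. v \<in> V \<and> v \<noteq> Rv}"
    then obtain v where v: "e = {v, par v}" "v \<in> V" "v \<noteq> Rv" by blast
    show "e \<in> T_edges k cls"
    proof (cases "v = Uv \<or> (\<exists>i. v = Tv i)")
      case True
      then show ?thesis
      proof
        assume "v = Uv"
        then have "e = {Uv, Pv}" using v by simp
        then show ?thesis unfolding T_edges_def by (intro UnI1 UnI2) simp
      next
        assume "\<exists>i. v = Tv i"
        then obtain i where "v = Tv i" by blast
        then have "e = {Cv i, Tv i}" "i < l" using v by (simp_all add: insert_commute)
        then show ?thesis unfolding T_edges_def by (intro UnI2 CollectI exI[of _ i] conjI)
      qed
    next
      case False
      then have "par v = Rv \<and> adj Rv v" using par_R v(2,3) by blast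
      then have "e = {Rv, v}" "adj Rv v" using v(1) by (simp_all add: insert_commute)
      then show ?thesis unfolding T_edges_def by (intro UnI1 CollectI exI[of _ v] conjI)
    qed
  next
    fix e assume "e \<in> T_edges k cls"
    then consider (a) v where "e = {Rv, v}" "adj Rv v" | (b) "e = {Uv, Pv}" | (c) i where "e = {Cv i, Tv i}" "i < l"
      unfolding T_edges_def Un_iff mem_Collect_eq singleton_iff by metis
    then show "e \<in> {{v, par v} | v. v \<in> V \<and> v \<noteq> Rv}"
    proof cases
      case (a v)
      have "v \<in> V" "v \<noteq> Rv" using a(2) unfolding G_adj_def by auto
      moreover have "\<not> (v = Uv \<or> (\<exists>i. v = Tv i))" using a(2) by auto
      ultimately have "par v = Rv" using par_R by blast
      then have "e = {v, par v}" using a(1) by (simp add: insert_commute)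
      then show ?thesis by (intro CollectI exI[of _ v] conjI) (use \<open>v \<in> V\<close> \<open>v \<noteq> Rv\<close> in simp_all)
    next
      case b
      then show ?thesis by (intro CollectI exI[of _ Uv] conjI) simp_all
    next
      case (c i)
      then have "e = {Tv i, par (Tv i)}" by (simp add: insert_commute)
      then show ?thesis by (intro CollectI exI[of _ "Tv i"] conjI) (use c in simp_all)
    qed
  qed
  finally show ?thesis .
qed

end

theorem lemma6:
  fixes k :: nat and cls :: "literal list list"
  assumes "sat3_instance k cls"
    and "satisfiable k cls"
  shows "\<exists>vs. is_lbfs (G_verts k cls) (G_adj k cls) vs
              \<and> F_tree (G_adj k cls) vs = T_edges k cls"
proof -
  obtain \<sigma> where sat: "satisfies \<sigma> cls" using assms(2) unfolding satisfiable_def by blast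
  define key where "key = ckey k cls \<sigma>"
  define sl where "sl = sort_key key [0..<length cls]"
  define ord where "ord = rev sl"
  have lsl: "length sl = length cls" by (simp add: sl_def)
  have ssl: "sorted (map key sl)" unfolding sl_def by (rule sorted_sort_key)
  have srt: "\<forall>e e'. e < e' \<longrightarrow> e' < length cls \<longrightarrow> \<not> lex_less (ckey k cls \<sigma> (ord!e)) (ckey k cls \<sigma> (ord!e'))"
  proof (intro allI impI)
    fix e e' :: nat assume ee: "e < e'" "e' < length cls"
    have o1: "ord ! e = sl ! (length cls - Suc e)" "ord ! e' = sl ! (length cls - Suc e')"
      using ee lsl by (auto simp: ord_def rev_nth)
    have "map key sl ! (length cls - Suc e') \<le> map key sl ! (length cls - Suc e)"
      using sorted_nth_mono[OF ssl, of "length cls - Suc e'" "length cls - Suc e"] ee lsl by auto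
    then have "key (ord ! e') \<le> key (ord ! e)" using o1 ee lsl by simp
    then have "\<not> key (ord ! e) < key (ord ! e')" by simp
    then show "\<not> lex_less (ckey k cls \<sigma> (ord!e)) (ckey k cls \<sigma> (ord!e'))"
      unfolding key_def lex_less_def list_less_def .
  qed
  interpret c: constr k cls \<sigma> ord
  proof
    show "sat3_instance k cls" by (rule assms(1))
    show "satisfies \<sigma> cls" by (rule sat)
    show "distinct ord" by (simp add: ord_def sl_def)
    show "set ord = {0..<length cls}" by (simp add: ord_def sl_def)
  qed (rule srt)
  show ?thesis by (rule exI[of _ c.vs], rule conjI[OF c.lbfs c.ftree])
qed

end
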